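(* Let $K$ be a field of characteristic $\neq2$ with the identity involution, let $\varepsilon,\delta\in\{1,-1\}$, and suppose $A$ is a nonsingular $n\times n$ matrix and $\Phi$ an $n\times n$ Frobenius block with $A=\varepsilon A^T$ and $A\Phi=\delta(A\Phi)^T$. Then $\varepsilon=1$ or $\delta=1$. If moreover $\chi_\Phi(x)=x^n$, then $\varepsilon=1$ when $n$ is odd and $\delta=1$ when $n$ is even.
   Context: A Frobenius block is an $n\times n$ matrix $\Phi$ with ones on the subdiagonal, last column $(-c_n,\dots,-c_1)^T$, zeros elsewhere, whose characteristic polynomial $\chi_\Phi(x)=x^n+c_1x^{n-1}+\dots+c_n$ is a power of an irreducible polynomial. With the identity involution, $A^*=A^T$. *)

theory Defs
  imports "Jordan_Normal_Form.Char_Poly"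
begin

definition frob_mat :: "nat \<Rightarrow> (nat \<Rightarrow> 'a::comm_ring_1) \<Rightarrow> 'a mat" where
  "frob_mat n c = mat n n (\<lambda>(i, j).
      if j = n - 1 then - c (n - i) else if i = j + 1 then 1 else 0)"

definition frobenius_block :: "nat \<Rightarrow> 'a::field mat \<Rightarrow> bool" where
  "frobenius_block n \<Phi> \<longleftrightarrow>
     (\<exists>c. \<Phi> = frob_mat n c) \<and>
     (\<exists>p k. irreducible p \<and> k > 0 \<and> char_poly \<Phi> = p ^ k)"

end

theory Submission
  imports Defs
begin

lemma frob_carrier[simp]: "frob_mat n c \<in> carrier_mat n n"
  unfolding frob_mat_def by simp

lemma frob_dims[simp]: "dim_row (frob_mat n c) = n" "dim_col (frob_mat n c) = n"
  unfolding frob_mat_def by simp_all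

lemma frob_index: "i < n \<Longrightarrow> j < n \<Longrightarrow> frob_mat n c $$ (i,j) =
   (if j = n - 1 then - c (n - i) else if i = j + 1 then 1 else 0)"
  unfolding frob_mat_def by simp

lemma frob_char_dvd:
  fixes c :: "nat \<Rightarrow> 'a::field"
  assumes n: "n > 0"
  defines "p \<equiv> [:0,1:]^n + (\<Sum>i<n. Polynomial.smult (c (n - i)) ([:0,1:]^i))"
  shows "p dvd char_poly (frob_mat n c)"
proof -
  let ?F = "frob_mat n c"
  let ?M = "transpose_mat (char_poly_matrix ?F)"
  have M: "?M \<in> carrier_mat n n" by simp
  have dC[simp]: "dim_row (char_poly_matrix ?F) = n" "dim_col (char_poly_matrix ?F) = n"
    by (simp_all add: char_poly_matrix_def)
  define w where "w = vec n (\<lambda>i. ([:0,1:]::'a poly)^i)"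
  have w: "w \<in> carrier_vec n" unfolding w_def by simp
  have Mij: "char_poly_matrix ?F $$ (j,i) = (if i = j then [:0,1:] else 0) + [: - ?F $$ (j,i) :]"
    if "i < n" "j < n" for i j
    using that unfolding char_poly_matrix_def by simp
  have Mw: "?M *\<^sub>v w = vec n (\<lambda>j. if j = n - 1 then p else 0)"
  proof (rule eq_vecI)
    fix j assume j: "j < dim_vec (vec n (\<lambda>j. if j = n - 1 then p else 0))"
    hence j: "j < n" by simp
    have "(?M *\<^sub>v w) $ j = (\<Sum>i<n. char_poly_matrix ?F $$ (i,j) * [:0,1:]^i)"
      using j w unfolding mult_mat_vec_def scalar_prod_def w_def
      by (auto simp: lessThan_atLeast0 intro!: sum.cong)
    also have "\<dots> = (\<Sum>i<n. (if j = i then [:0,1:] else 0) * [:0,1:]^i)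
        + (\<Sum>i<n. [: - ?F $$ (i,j) :] * [:0,1:]^i)"
      using j by (simp add: Mij distrib_right sum.distrib sum_subtractf sum_negf del: char_poly_matrix_closed)
    also have "(\<Sum>i<n. (if j = i then [:0,1:] else 0) * [:0,1:]^i) = [:0,1:]^(Suc j)"
    proof -
      have "(\<Sum>i<n. (if j = i then [:0,1:] else 0) * [:0,1:]^i) = (\<Sum>i<n. if j = i then [:0,1:] * [:0,1:]^i else 0)"
        by (intro sum.cong) auto
      also have "\<dots> = [:0,1:] * [:0,1:]^j" using j by (simp add: sum.delta')
      finally show ?thesis by simp
    qed
    finally have eq: "(?M *\<^sub>v w) $ j = [:0,1:]^(Suc j) + (\<Sum>i<n. [: - ?F $$ (i,j) :] * [:0,1:]^i)" .
    show "(?M *\<^sub>v w) $ j = vec n (\<lambda>j. if j = n - 1 then p else 0) $ j"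
    proof (cases "j = n - 1")
      case True
      have "(\<Sum>i<n. [: - ?F $$ (i,j) :] * [:0,1:]^i) = (\<Sum>i<n. Polynomial.smult (c (n - i)) ([:0,1:]^i))"
        using True by (intro sum.cong) (auto simp: frob_index)
      thus ?thesis using eq True n j by (simp add: p_def)
    next
      case False
      have "(\<Sum>i<n. [: - ?F $$ (i,j) :] * [:0,1:]^i) = (\<Sum>i<n. if i = Suc j then - ([:0,1:]^i) else 0)"
        using False j by (intro sum.cong) (auto simp: frob_index)
      also have "\<dots> = - ([:0,1:]^(Suc j))" using False j n by (simp add: sum.delta)
      finally show ?thesis using eq False j by simp
    qed
  qed (simp add: w)
  have adj: "adj_mat ?M * ?M = det ?M \<cdot>\<^sub>m 1\<^sub>m n" "adj_mat ?M \<in> carrier_mat n n"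
    using adj_mat[OF M] by auto
  have "((adj_mat ?M * ?M) *\<^sub>v w) $ 0 = det ?M"
    unfolding adj using n w by (simp add: w_def)
  moreover have "((adj_mat ?M * ?M) *\<^sub>v w) $ 0 = (adj_mat ?M *\<^sub>v (?M *\<^sub>v w)) $ 0"
    by (simp only: assoc_mult_mat_vec[OF adj(2) M w])
  moreover have "(adj_mat ?M *\<^sub>v (?M *\<^sub>v w)) $ 0 = adj_mat ?M $$ (0, n - 1) * p"
  proof -
    have "(adj_mat ?M *\<^sub>v (?M *\<^sub>v w)) $ 0 = (\<Sum>k<n. adj_mat ?M $$ (0,k) * (if k = n - 1 then p else 0))"
      unfolding Mw using adj n unfolding mult_mat_vec_def scalar_prod_def
      by (auto simp: lessThan_atLeast0 intro!: sum.cong)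
    also have "\<dots> = adj_mat ?M $$ (0, n - 1) * p" using n
      by (simp add: if_distrib sum.delta cong: if_cong)
    finally show ?thesis .
  qed
  ultimately have "det ?M = adj_mat ?M $$ (0, n - 1) * p" by simp
  moreover have "det ?M = char_poly ?F" unfolding char_poly_def
    by (rule det_transpose[of _ n]) simp
  ultimately show ?thesis by (metis dvd_triv_right)
qed

lemma frob_nilp_coeffs:
  fixes c :: "nat \<Rightarrow> 'a::field"
  assumes n: "n > 0" and ch: "char_poly (frob_mat n c) = monom 1 n" and m: "m < n"
  shows "c (n - m) = 0"
proof -
  define q where "q = (\<Sum>i<n. monom (c (n - i)) i)"
  define p where "p = [:0,1:]^n + (\<Sum>i<n. Polynomial.smult (c (n - i)) ([:0,1:]^i))"
  have pq: "p = monom 1 n + q" unfolding p_def q_def by (simp add: monom_altdef)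
  have cq: "coeff q k = (if k < n then c (n - k) else 0)" for k
    unfolding q_def coeff_sum by (simp add: sum.delta')
  have dq: "degree q \<le> n - 1" by (rule degree_le) (use cq in auto)
  have cpn: "coeff p n = 1" using cq pq by simp
  have dp: "degree p = n"
  proof (rule antisym)
    show "degree p \<le> n" unfolding pq using dq
      by (metis degree_add_le degree_monom_le le_trans diff_le_self)
    show "n \<le> degree p" using cpn by (intro le_degree) simp
  qed
  have "p dvd monom 1 n" using frob_char_dvd[OF n, of c] ch unfolding p_def by simp
  then obtain r where r: "monom 1 n = p * r" by (elim dvdE)
  have p0: "p \<noteq> 0" using cpn by auto
  have r0: "r \<noteq> 0" using r by auto
  have "degree (monom (1::'a) n) = n" by (simp add: degree_monom_eq)
  hence "degree r = 0" using r degree_mult_eq[OF p0 r0] dp by simp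
  then obtain a where ra: "r = [:a:]" by (metis degree_eq_zeroE)
  have "coeff (monom (1::'a) n) n = coeff p n * a" unfolding r ra by simp
  hence "a = 1" using cpn by simp
  hence "p = monom 1 n" using r ra by simp
  hence "q = 0" using pq by simp
  thus ?thesis using cq[of m] m by simp
qed

lemma det_zero_col:
  fixes A :: "'a::field mat"
  assumes A: "A \<in> carrier_mat n n" and k: "k < n" and z: "\<And>i. i < n \<Longrightarrow> A $$ (i,k) = 0"
  shows "det A = 0"
proof -
  have "A *\<^sub>v unit_vec n k = 0\<^sub>v n"
  proof (rule eq_vecI)
    fix i assume "i < dim_vec (0\<^sub>v n :: 'a vec)"
    hence i: "i < n" by simp
    have "(A *\<^sub>v unit_vec n k) $ i = (\<Sum>j\<in>{0..<n}. A $$ (i,j) * (if j = k then 1 else 0))"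
      using A i k unfolding mult_mat_vec_def scalar_prod_def by (auto intro!: sum.cong)
    also have "\<dots> = A $$ (i,k)" using k by (simp add: if_distrib sum.delta cong: if_cong)
    finally show "(A *\<^sub>v unit_vec n k) $ i = 0\<^sub>v n $ i" using z i by simp
  qed (use A in simp)
  thus ?thesis using det_0_iff_vec_prod_zero_field[OF A] k
    by (metis unit_vec_carrier unit_vec_nonzero)
qed

theorem lemma8:
  fixes A \<Phi> :: "'a::field mat" and n :: nat and \<epsilon> \<delta> :: 'a
  assumes char: "(2::'a) \<noteq> 0"
    and eps: "\<epsilon> \<in> {1, -1}" and del: "\<delta> \<in> {1, -1}"
    and A: "A \<in> carrier_mat n n" and nonsing: "det A \<noteq> 0"
    and frob: "frobenius_block n \<Phi>"
    and symA: "A = \<epsilon> \<cdot>\<^sub>m transpose_mat A"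
    and symAPhi: "A * \<Phi> = \<delta> \<cdot>\<^sub>m transpose_mat (A * \<Phi>)"
  shows "(\<epsilon> = 1 \<or> \<delta> = 1) \<and>
         (char_poly \<Phi> = monom 1 n \<longrightarrow>
            (odd n \<longrightarrow> \<epsilon> = 1) \<and> (even n \<longrightarrow> \<delta> = 1))"
proof -
  from frob obtain c where Phi: "\<Phi> = frob_mat n c" and
    irr: "\<exists>p k. irreducible p \<and> k > 0 \<and> char_poly \<Phi> = p ^ k"
    unfolding frobenius_block_def by auto
  have n: "n > 0"
  proof (rule ccontr)
    assume "\<not> n > 0"
    hence "n = 0" by simp
    hence "char_poly \<Phi> = 1" unfolding Phi char_poly_def
      by (intro det_dim_zero) simp
    with irr obtain p :: "'a poly" and k :: nat where p: "irreducible p" "k > 0" "p ^ k = 1" by auto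
    hence "p dvd 1" by (metis dvd_power)
    with p show False by (meson irreducible_not_unit)
  qed
  define s where "s = \<epsilon> * \<delta>"
  have ee: "\<epsilon> * \<epsilon> = 1" "\<delta> * \<delta> = 1" using eps del by auto
  have ss: "s * s = 1" unfolding s_def using ee by (simp add: algebra_simps)
  have s0: "s \<noteq> 0" using ss by auto
  have aT: "A $$ (i,j) = \<epsilon> * A $$ (j,i)" if "i < n" "j < n" for i j
  proof -
    have "A $$ (i,j) = (\<epsilon> \<cdot>\<^sub>m transpose_mat A) $$ (i,j)" using symA by simp
    thus ?thesis using that A by simp
  qed
  have APhi: "(A * \<Phi>) $$ (i,j) = (\<Sum>k<n. A $$ (i,k) *
      (if j = n - 1 then - c (n - k) else if k = j + 1 then 1 else 0))" if "i < n" "j < n" for i j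
    using that A unfolding Phi times_mat_def scalar_prod_def
    by (auto simp: frob_index lessThan_atLeast0 intro!: sum.cong)
  have APhi1: "(A * \<Phi>) $$ (i,j) = A $$ (i, j + 1)" if "i < n" "j < n - 1" for i j
  proof -
    have "(A * \<Phi>) $$ (i,j) = (\<Sum>k<n. A $$ (i,k) * (if k = j + 1 then 1 else 0))"
      using that by (simp add: APhi)
    also have "\<dots> = A $$ (i, j + 1)" using that by (simp add: if_distrib sum.delta cong: if_cong)
    finally show ?thesis .
  qed
  have APhiT: "(A * \<Phi>) $$ (i,j) = \<delta> * (A * \<Phi>) $$ (j,i)" if "i < n" "j < n" for i j
  proof -
    have "(A * \<Phi>) $$ (i,j) = (\<delta> \<cdot>\<^sub>m transpose_mat (A * \<Phi>)) $$ (i,j)" using symAPhi by simp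
    thus ?thesis using that A unfolding Phi by simp
  qed
  have R1: "A $$ (i + 1, j) = s * A $$ (i, j + 1)" if "i < n - 1" "j < n - 1" for i j
  proof -
    have "A $$ (i, j + 1) = \<delta> * A $$ (j, i + 1)"
      using APhiT[of i j] APhi1[of i j] APhi1[of j i] that by simp
    also have "\<dots> = \<delta> * (\<epsilon> * A $$ (i + 1, j))" using aT[of j "i+1"] that by simp
    finally have "A $$ (i, j + 1) = s * A $$ (i + 1, j)" unfolding s_def by (simp add: ac_simps)
    hence "s * A $$ (i, j + 1) = (s * s) * A $$ (i + 1, j)" by (simp add: ac_simps)
    thus ?thesis using ss by simp
  qed
  have part1: "\<epsilon> = 1 \<or> \<delta> = 1"
  proof (rule ccontr)
    assume "\<not> (\<epsilon> = 1 \<or> \<delta> = 1)"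
    hence em: "\<epsilon> = -1" "\<delta> = -1" using eps del by auto
    hence s1: "s = 1" unfolding s_def by simp
    have Q: "\<forall>i j. i + d < n \<longrightarrow> d \<le> j \<longrightarrow> j < n \<longrightarrow> A $$ (i + d, j - d) = A $$ (i, j)" for d
    proof (induction d)
      case 0 show ?case by simp
    next
      case (Suc d)
      show ?case
      proof (intro allI impI)
        fix i j assume h: "i + Suc d < n" "Suc d \<le> j" "j < n"
        have "A $$ (i + Suc d, j - Suc d) = A $$ ((i + d) + 1, j - Suc d)" by simp
        also have "\<dots> = A $$ (i + d, j - Suc d + 1)" using R1[of "i+d" "j - Suc d"] h s1 by simp
        also have "j - Suc d + 1 = j - d" using h by simp
        also have "A $$ (i + d, j - d) = A $$ (i, j)" using Suc.IH h by simp
        finally show "A $$ (i + Suc d, j - Suc d) = A $$ (i, j)" .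
      qed
    qed
    have sym: "A $$ (j, i) = A $$ (i, j)" if "i < j" "j < n" for i j
    proof -
      have "A $$ (i + (j - i), j - (j - i)) = A $$ (i, j)" using Q[of "j - i", rule_format, of i j] that by simp
      thus ?thesis using that by simp
    qed
    have z: "A $$ (i, j) = 0" if "i < n" "j < n" for i j
    proof -
      have "A $$ (i,j) = A $$ (j,i)"
      proof (cases i j rule: linorder_cases)
        case less thus ?thesis using sym[of i j] that by simp
      next
        case greater thus ?thesis using sym[of j i] that by simp
      qed simp
      moreover have "A $$ (i,j) = - A $$ (j,i)" using aT[OF that] em by simp
      ultimately have "2 * A $$ (i,j) = 0" by (metis mult_2 add.right_inverse)
      thus ?thesis using char by simp
    qed
    have "det A = 0" by (rule det_zero_col[OF A n]) (use z n in auto)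
    with nonsing show False by simp
  qed
  have part2: "(odd n \<longrightarrow> \<epsilon> = 1) \<and> (even n \<longrightarrow> \<delta> = 1)" if ch: "char_poly \<Phi> = monom 1 n"
  proof -
    have c0: "c (n - k) = 0" if "k < n" for k
      using frob_nilp_coeffs[OF n ch[unfolded Phi] that] .
    have APhi2: "(A * \<Phi>) $$ (i, n - 1) = 0" if "i < n" for i
      using that n by (simp add: APhi c0)
    have lastcol: "A $$ (i + 1, n - 1) = 0" if "i < n - 1" for i
    proof -
      have "0 = \<delta> * A $$ (n - 1, i + 1)"
        using APhiT[of i "n - 1"] APhi2[of i] APhi1[of "n - 1" i] that n by simp
      also have "\<dots> = s * A $$ (i + 1, n - 1)" using aT[of "n - 1" "i + 1"] that n
        unfolding s_def by (simp add: ac_simps)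
      finally show ?thesis using s0 by simp
    qed
    have P: "i < n \<longrightarrow> (\<forall>j<n. A $$ (i,j) = s ^ i * (if i + j < n then A $$ (0, i + j) else 0))" for i
    proof (induction i)
      case 0 show ?case by simp
    next
      case (Suc i)
      show ?case
      proof (intro impI allI)
        fix j assume h: "Suc i < n" "j < n"
        show "A $$ (Suc i, j) = s ^ Suc i * (if Suc i + j < n then A $$ (0, Suc i + j) else 0)"
        proof (cases "j < n - 1")
          case True
          have "A $$ (Suc i, j) = s * A $$ (i, j + 1)" using R1[of i j] True h by simp
          also have "\<dots> = s * (s ^ i * (if i + (j + 1) < n then A $$ (0, i + (j + 1)) else 0))"
            using Suc.IH h True by simp
          finally show ?thesis by simp
        next
          case False
          hence "j = n - 1" using h by simp
          thus ?thesis using lastcol[of i] h by simp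
        qed
      qed
    qed
    define a where "a = A $$ (0, n - 1)"
    have a0: "a \<noteq> 0"
    proof
      assume a: "a = 0"
      have "A $$ (n - 1, j) = 0" if "j < n" for j
      proof (cases "j = 0")
        case True thus ?thesis using P[of "n - 1"] that n a unfolding a_def by auto
      next
        case False
        hence "\<not> (n - 1 + j < n)" using n by simp
        thus ?thesis using P[of "n - 1"] that n by auto
      qed
      hence "A $$ (j, n - 1) = 0" if "j < n" for j
        using aT[of j "n - 1"] that n by simp
      hence "det A = 0" by (intro det_zero_col[OF A, of "n - 1"]) (use n in auto)
      with nonsing show False by simp
    qed
    have "A $$ (n - 1, 0) = s ^ (n - 1) * a" using P[of "n - 1"] n unfolding a_def by auto
    moreover have "A $$ (n - 1, 0) = \<epsilon> * a" using aT[of "n - 1" 0] n unfolding a_def by simp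
    ultimately have key: "s ^ (n - 1) = \<epsilon>" using a0 by simp
    have sp: "s ^ (2 * m) = 1" for m by (simp add: power_mult power2_eq_square ss)
    show ?thesis
    proof (intro conjI impI)
      assume "odd n"
      then obtain m where "n - 1 = 2 * m" using n by (metis odd_two_times_div_two_nat)
      thus "\<epsilon> = 1" using key sp by simp
    next
      assume "even n"
      then obtain m where m: "n = 2 * m" by blast
      with n have "n - 1 = 2 * (m - 1) + 1" by simp
      hence "s = \<epsilon>" using key sp[of "m - 1"] by (simp add: power_add)
      hence "\<epsilon> * \<delta> = \<epsilon> * 1" unfolding s_def by simp
      thus "\<delta> = 1" using ee by (metis mult_cancel_left mult_zero_left zero_neq_one)
    qed
  qed
  show ?thesis using part1 part2 by blast
qed

end
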